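(* Let $\Lambda\subseteq\Sigma_A$ be a shift space, let $x\in\Lambda^{\mathrm{fin}}$ and let $F\subset L_\Lambda$ be a nonempty finite set. Then $Z(x)\cap\Lambda$ and $Z(x,F)\cap\Lambda$ are finitely defined sets in $\Lambda$. The anticipation of $Z(x)\cap\Lambda$ is $l(x)-1$ and the anticipation of $Z(x,F)\cap\Lambda$ is $l(x)$.
   Context: $A$ is a countable discrete alphabet; $\varepsilon$ is a new symbol (empty letter), $\tilde A=A\cup\{\varepsilon\}$. $\Sigma_A$ consists of $A^{\mathbb N}$ together with (when $A$ is infinite) the finite sequences: sequences in $\tilde A$ containing some $\varepsilon$, with all entries after the first $\varepsilon$ equal to $\varepsilon$. The length $l(x)$ is the number of entries before the first $\varepsilon$ ($\infty$ if none); $\mathcal O=(\varepsilon\varepsilon\dots)$ is the empty sequence. For finite $x$ and finite $F\subset A$: $Z(x,F)=\{y\in\Sigma_A: y_i=x_i\ (1\le i\le l(x)),\ y_{l(x)+1}\notin F\}$ and $Z(x)=Z(x,\emptyset)$; these generate the topology of $\Sigma_A$. The shift is $\sigma((x_i)_i)=(x_{i+1})_i$. For $\Lambda\subseteq\Sigma_A$: $\Lambda^{\mathrm{fin}}$ is the set of finite sequences in $\Lambda$; $B_n(\Lambda)\subseteq\tilde A^n$ is the set of length-$n$ words occurring consecutively in elements of $\Lambda$, $B(\Lambda)=\bigcup_n B_n(\Lambda)$, $L_\Lambda=B_1(\Lambda)\setminus\{\varepsilon\}$; $\mathcal F(\Lambda,a)=\{b\in B_1(\Lambda): ab\in B(\Lambda)\}$.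 A shift space is a closed $\Lambda\subseteq\Sigma_A$ with $\sigma(\Lambda)\subseteq\Lambda$ such that $\mathcal O\in\Lambda$ iff $L_\Lambda$ is infinite, and a finite $x\neq\mathcal O$ lies in $\Lambda$ iff $\mathcal F(\Lambda,x)$ is infinite. A set $C\subseteq\Lambda$ is finitely defined in $\Lambda$ if there exist $I,J\subseteq\mathbb N$, integers $\ell_i,n_j\ge0$ and words $b_i,d_j\in B(\Sigma_A)$ with $C=\{x\in\Lambda: (x_1\dots x_{1+\ell_i})=b_i\text{ for some } i\in I\}$ and $\Lambda\setminus C=\{x\in\Lambda: (x_1\dots x_{1+n_j})=d_j\text{ for some } j\in J\}$; then $C$ is said to have anticipation $\sup_{i\in I}\ell_i$. *)

theory Defs
  imports "HOL-Analysis.Analysis" "HOL-Library.Extended_Nat"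
begin

text \<open>Letters are elements of a set A of type 'a; the empty letter is None,
a letter a is Some a.  Sequences are maps nat => 'a option, where the
paper's entry x_i (i >= 1) is  x (i - 1)  (0-based indexing).\<close>

type_synonym 'a seq = "nat \<Rightarrow> 'a option"

definition empty_seq :: "'a seq" where
  "empty_seq = (\<lambda>_. None)"

definition is_fin :: "'a seq \<Rightarrow> bool" where
  "is_fin x \<longleftrightarrow> (\<exists>i. x i = None)"

definition seq_len :: "'a seq \<Rightarrow> enat" where
  "seq_len x = (if \<exists>i. x i = None then enat (LEAST i. x i = None) else \<infinity>)"

definition good_seq :: "'a set \<Rightarrow> 'a seq \<Rightarrow> bool" where
  "good_seq A x \<longleftrightarrow> (\<forall>i. x i = None \<or> x i \<in> Some ` A) \<and> (\<forall>i. x i = None \<longrightarrow> x (Suc i) = None)"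

definition SigmaA :: "'a set \<Rightarrow> 'a seq set" where
  "SigmaA A = {x. good_seq A x \<and> (finite A \<longrightarrow> \<not> is_fin x)}"

definition Zcyl :: "'a set \<Rightarrow> 'a seq \<Rightarrow> 'a set \<Rightarrow> 'a seq set" where
  "Zcyl A x F = {y \<in> SigmaA A. (\<forall>i. enat i < seq_len x \<longrightarrow> y i = x i)
                       \<and> y (the_enat (seq_len x)) \<notin> Some ` F}"

definition sigma_top :: "'a set \<Rightarrow> 'a seq topology" where
  "sigma_top A = topology_generated_by
     {Zcyl A x F | x F. good_seq A x \<and> is_fin x \<and> finite F \<and> F \<subseteq> A}"

definition shift :: "'a seq \<Rightarrow> 'a seq" where
  "shift x = (\<lambda>i. x (Suc i))"

text \<open>the word (y_{k+1} ... y_{k+n})\<close>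
definition word_at :: "'a seq \<Rightarrow> nat \<Rightarrow> nat \<Rightarrow> 'a option list" where
  "word_at y k n = map (\<lambda>i. y (k + i)) [0..<n]"

definition Bn :: "'a seq set \<Rightarrow> nat \<Rightarrow> 'a option list set" where
  "Bn \<Lambda> n = {w. length w = n \<and> (\<exists>y\<in>\<Lambda>. \<exists>k. w = word_at y k n)}"

definition Bwords :: "'a seq set \<Rightarrow> 'a option list set" where
  "Bwords \<Lambda> = (\<Union>n\<in>{1..}. Bn \<Lambda> n)"

definition B1 :: "'a seq set \<Rightarrow> 'a option set" where
  "B1 \<Lambda> = {c. [c] \<in> Bn \<Lambda> 1}"

definition Lset :: "'a seq set \<Rightarrow> 'a set" where
  "Lset \<Lambda> = {a. Some a \<in> B1 \<Lambda>}"

definition follower :: "'a seq set \<Rightarrow> 'a option list \<Rightarrow> 'a option set" where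
  "follower \<Lambda> w = {c \<in> B1 \<Lambda>. w @ [c] \<in> Bwords \<Lambda>}"

definition shift_space :: "'a set \<Rightarrow> 'a seq set \<Rightarrow> bool" where
  "shift_space A \<Lambda> \<longleftrightarrow>
     closedin (sigma_top A) \<Lambda> \<and> shift ` \<Lambda> \<subseteq> \<Lambda>
     \<and> (empty_seq \<in> \<Lambda> \<longleftrightarrow> infinite (Lset \<Lambda>))
     \<and> (\<forall>x \<in> SigmaA A. is_fin x \<and> x \<noteq> empty_seq \<longrightarrow>
          (x \<in> \<Lambda> \<longleftrightarrow> infinite (follower \<Lambda> (word_at x 0 (the_enat (seq_len x))))))"

definition fin_def_by ::
  "'a set \<Rightarrow> 'a seq set \<Rightarrow> 'a seq set \<Rightarrow> nat set \<Rightarrow> nat set \<Rightarrow> (nat \<Rightarrow> nat) \<Rightarrow> (nat \<Rightarrow> nat)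
     \<Rightarrow> (nat \<Rightarrow> 'a option list) \<Rightarrow> (nat \<Rightarrow> 'a option list) \<Rightarrow> bool" where
  "fin_def_by A \<Lambda> C I J l n b d \<longleftrightarrow>
     (\<forall>i\<in>I. b i \<in> Bwords (SigmaA A)) \<and> (\<forall>j\<in>J. d j \<in> Bwords (SigmaA A))
     \<and> C = {x \<in> \<Lambda>. \<exists>i\<in>I. word_at x 0 (1 + l i) = b i}
     \<and> \<Lambda> - C = {x \<in> \<Lambda>. \<exists>j\<in>J. word_at x 0 (1 + n j) = d j}"

definition finitely_defined :: "'a set \<Rightarrow> 'a seq set \<Rightarrow> 'a seq set \<Rightarrow> bool" where
  "finitely_defined A \<Lambda> C \<longleftrightarrow> C \<subseteq> \<Lambda> \<and> (\<exists>I J l n b d. fin_def_by A \<Lambda> C I J l n b d)"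

definition fin_def_anticipation :: "'a set \<Rightarrow> 'a seq set \<Rightarrow> 'a seq set \<Rightarrow> nat \<Rightarrow> bool" where
  "fin_def_anticipation A \<Lambda> C k \<longleftrightarrow> C \<subseteq> \<Lambda> \<and>
     (\<exists>I J l n b d. fin_def_by A \<Lambda> C I J l n b d \<and> (SUP i\<in>I. enat (l i)) = enat k)"

end

theory Submission
  imports Defs
begin

lemma Lambda_sub:
  assumes "shift_space A \<Lambda>" shows "\<Lambda> \<subseteq> SigmaA A"
proof -
  have "\<Lambda> \<subseteq> topspace (sigma_top A)"
    using assms closedin_subset unfolding shift_space_def by blast
  also have "\<dots> \<subseteq> SigmaA A" unfolding sigma_top_def Zcyl_def by auto
  finally show ?thesis .
qed

lemma word_at_eqD:
  assumes "word_at y 0 n = word_at z 0 n" "i < n" shows "y i = z i"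
proof -
  have "word_at y 0 n ! i = word_at z 0 n ! i" using assms by simp
  thus ?thesis using assms(2) unfolding word_at_def by simp
qed

lemma word_in_Bwords:
  assumes "y \<in> SigmaA A" shows "word_at y 0 (Suc k) \<in> Bwords (SigmaA A)"
proof -
  have "word_at y 0 (Suc k) \<in> Bn (SigmaA A) (Suc k)"
    unfolding Bn_def using assms by (auto simp: word_at_def intro!: bexI[of _ y] exI[of _ 0])
  thus ?thesis unfolding Bwords_def by auto
qed

lemma words_countable:
  assumes "countable A" "S \<subseteq> SigmaA A"
  shows "countable ((\<lambda>y. word_at y 0 (Suc k)) ` S)"
proof (rule countable_subset)
  show "(\<lambda>y. word_at y 0 (Suc k)) ` S \<subseteq> lists (insert None (Some ` A))"
  proof
    fix w assume "w \<in> (\<lambda>y. word_at y 0 (Suc k)) ` S"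
    then obtain y where y: "y \<in> S" "w = word_at y 0 (Suc k)" by blast
    have "\<forall>i. y i \<in> insert None (Some ` A)" using y assms(2)
      unfolding SigmaA_def good_seq_def by blast
    thus "w \<in> lists (insert None (Some ` A))" using y by (auto simp: word_at_def)
  qed
  show "countable (lists (insert None (Some ` A)))" using assms(1) by simp
qed

lemma generic:
  assumes cA: "countable A" and LS: "\<Lambda> \<subseteq> SigmaA A" and CL: "C \<subseteq> \<Lambda>" and xC: "x \<in> C"
    and inv: "\<And>y z. y \<in> \<Lambda> \<Longrightarrow> z \<in> \<Lambda> \<Longrightarrow> word_at y 0 (Suc k) = word_at z 0 (Suc k)
                 \<Longrightarrow> y \<in> C \<Longrightarrow> z \<in> C"
  shows "finitely_defined A \<Lambda> C \<and> fin_def_anticipation A \<Lambda> C k"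
proof -
  define P where "P = (\<lambda>y. word_at y 0 (Suc k)) ` C"
  define Q where "Q = (\<lambda>y. word_at y 0 (Suc k)) ` (\<Lambda> - C)"
  have cP: "countable P" unfolding P_def using words_countable[OF cA] CL LS by blast
  have cQ: "countable Q" unfolding Q_def using words_countable[OF cA] CL LS by blast
  have Pne: "P \<noteq> {}" using xC P_def by auto
  have PB: "P \<subseteq> Bwords (SigmaA A)" unfolding P_def using CL LS by (auto intro!: word_in_Bwords)
  have QB: "Q \<subseteq> Bwords (SigmaA A)" unfolding Q_def using CL LS by (auto intro!: word_in_Bwords)
  define J where "J = {j::nat. Q \<noteq> {}}"
  have fd: "fin_def_by A \<Lambda> C UNIV J (\<lambda>_. k) (\<lambda>_. k) (from_nat_into P) (from_nat_into Q)"
    unfolding fin_def_by_def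
  proof (intro conjI)
    show "\<forall>i\<in>UNIV. from_nat_into P i \<in> Bwords (SigmaA A)"
      using from_nat_into[OF Pne] PB by blast
    show "\<forall>j\<in>J. from_nat_into Q j \<in> Bwords (SigmaA A)"
      using from_nat_into[of Q] QB unfolding J_def by blast
    have rP: "range (from_nat_into P) = P" using Pne cP by simp
    show "C = {x \<in> \<Lambda>. \<exists>i\<in>UNIV. word_at x 0 (1 + k) = from_nat_into P i}"
    proof -
      have "C = {x \<in> \<Lambda>. word_at x 0 (Suc k) \<in> P}"
      proof (intro equalityI subsetI)
        fix y assume "y \<in> C"
        then show "y \<in> {x \<in> \<Lambda>. word_at x 0 (Suc k) \<in> P}" using CL unfolding P_def by auto
      next
        fix y assume "y \<in> {x \<in> \<Lambda>. word_at x 0 (Suc k) \<in> P}"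
        then obtain c where c: "y \<in> \<Lambda>" "c \<in> C" "word_at y 0 (Suc k) = word_at c 0 (Suc k)"
          unfolding P_def by auto
        show "y \<in> C"
          using c CL inv[of c y] inv[of y c] by auto
      qed
      also have "\<dots> = {x \<in> \<Lambda>. \<exists>i\<in>UNIV. word_at x 0 (1 + k) = from_nat_into P i}"
      proof -
        have "\<And>w. w \<in> P \<longleftrightarrow> (\<exists>i. w = from_nat_into P i)" using rP by blast
        thus ?thesis by simp
      qed
      finally show ?thesis .
    qed
    show "\<Lambda> - C = {x \<in> \<Lambda>. \<exists>j\<in>J. word_at x 0 (1 + k) = from_nat_into Q j}"
    proof (cases "Q = {}")
      case True
      then show ?thesis unfolding J_def Q_def by auto
    next
      case False
      have rQ: "range (from_nat_into Q) = Q" using False cQ by simp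
      have "\<Lambda> - C = {x \<in> \<Lambda>. word_at x 0 (Suc k) \<in> Q}"
      proof (intro equalityI subsetI)
        fix y assume "y \<in> \<Lambda> - C"
        then show "y \<in> {x \<in> \<Lambda>. word_at x 0 (Suc k) \<in> Q}" using CL unfolding Q_def by auto
      next
        fix y assume "y \<in> {x \<in> \<Lambda>. word_at x 0 (Suc k) \<in> Q}"
        then obtain c where c: "y \<in> \<Lambda>" "c \<in> \<Lambda> - C" "word_at y 0 (Suc k) = word_at c 0 (Suc k)"
          unfolding Q_def by auto
        show "y \<in> \<Lambda> - C"
          using c CL inv[of c y] inv[of y c] by auto
      qed
      also have "\<dots> = {x \<in> \<Lambda>. \<exists>j\<in>J. word_at x 0 (1 + k) = from_nat_into Q j}"
      proof -
        have "\<And>w. w \<in> Q \<longleftrightarrow> (\<exists>i. w = from_nat_into Q i)" using rQ by blast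
        thus ?thesis using False unfolding J_def by simp
      qed
      finally show ?thesis .
    qed
  qed
  have su: "(SUP i\<in>(UNIV::nat set). enat k) = enat k" by simp
  have 1: "finitely_defined A \<Lambda> C" unfolding finitely_defined_def
    apply (rule conjI[OF CL]) apply (rule exI)+ by (rule fd)
  have 2: "fin_def_anticipation A \<Lambda> C k" unfolding fin_def_anticipation_def
    apply (rule conjI[OF CL]) apply (rule exI)+ apply (rule conjI[OF fd]) by (rule su)
  show ?thesis using 1 2 by (rule conjI)
qed

theorem mainTheorem3:
  fixes A :: "'a set" and \<Lambda> :: "'a seq set" and x :: "'a seq" and F :: "'a set"
  assumes "countable A"
    and "shift_space A \<Lambda>"
    and "x \<in> \<Lambda>" and "is_fin x"
    and "F \<subseteq> Lset \<Lambda>" and "finite F" and "F \<noteq> {}"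
  shows "finitely_defined A \<Lambda> (Zcyl A x {} \<inter> \<Lambda>)
       \<and> finitely_defined A \<Lambda> (Zcyl A x F \<inter> \<Lambda>)
       \<and> fin_def_anticipation A \<Lambda> (Zcyl A x {} \<inter> \<Lambda>) (the_enat (seq_len x) - 1)
       \<and> fin_def_anticipation A \<Lambda> (Zcyl A x F \<inter> \<Lambda>) (the_enat (seq_len x))"
proof -
  have LS: "\<Lambda> \<subseteq> SigmaA A" using Lambda_sub[OF assms(2)] .
  define m where "m = (LEAST i. x i = None)"
  have ex: "\<exists>i. x i = None" using assms(4) unfolding is_fin_def .
  have sl: "seq_len x = enat m" unfolding seq_len_def m_def using ex by (simp only: if_True)
  have xm: "x m = None" using ex unfolding m_def by (rule LeastI_ex)
  have xS: "x \<in> SigmaA A" using LS assms(3) by blast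
  have Z0: "Zcyl A x {} = {y \<in> SigmaA A. \<forall>i<m. y i = x i}"
    unfolding Zcyl_def sl by auto
  have ZF: "Zcyl A x F = {y \<in> SigmaA A. (\<forall>i<m. y i = x i) \<and> y m \<notin> Some ` F}"
    unfolding Zcyl_def sl by auto
  have g1: "finitely_defined A \<Lambda> (Zcyl A x {} \<inter> \<Lambda>) \<and> fin_def_anticipation A \<Lambda> (Zcyl A x {} \<inter> \<Lambda>) (m - 1)"
  proof (rule generic[OF assms(1) LS])
    show "x \<in> Zcyl A x {} \<inter> \<Lambda>" using xS assms(3) Z0 by auto
    fix y z assume yz: "y \<in> \<Lambda>" "z \<in> \<Lambda>" "word_at y 0 (Suc (m - 1)) = word_at z 0 (Suc (m - 1))"
      "y \<in> Zcyl A x {} \<inter> \<Lambda>"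
    have "\<forall>i<m. z i = y i"
    proof (intro allI impI)
      fix i assume "i < m"
      hence "i < Suc (m - 1)" by simp
      thus "z i = y i" using word_at_eqD[OF yz(3)] by simp
    qed
    then show "z \<in> Zcyl A x {} \<inter> \<Lambda>" using yz LS Z0 by auto
  qed auto
  have g2: "finitely_defined A \<Lambda> (Zcyl A x F \<inter> \<Lambda>) \<and> fin_def_anticipation A \<Lambda> (Zcyl A x F \<inter> \<Lambda>) m"
  proof (rule generic[OF assms(1) LS])
    show "x \<in> Zcyl A x F \<inter> \<Lambda>" using xS assms(3) ZF xm by auto
    fix y z assume yz: "y \<in> \<Lambda>" "z \<in> \<Lambda>" "word_at y 0 (Suc m) = word_at z 0 (Suc m)"
      "y \<in> Zcyl A x F \<inter> \<Lambda>"
    have "\<forall>i<Suc m. z i = y i" using word_at_eqD[OF yz(3)] by simp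
    then show "z \<in> Zcyl A x F \<inter> \<Lambda>" using yz LS ZF by auto
  qed auto
  show ?thesis using g1 g2 sl by simp
qed

end
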